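(* Let $\mathcal B_{IPR}=\{B_1,\dots,B_m\}$ be the partition of the $n$ jobs returned by IPR with $\rho=4$. Then $b_{\max}\le\frac{2W}{\ell+1}$, where, for the final tentative assignment, $b_{\max}=\max_{B\in\mathcal B_{IPR},|B|\ge2}p(B)$, $\mathcal M_{\max}$ is the collection containing a bag of processing time $b_{\max}$, $W=\sum_{B\in\mathcal M_{\max}}p(B)$ and $\ell=|\mathcal M_{\max}|$.
   Context: Jobs $j\in[n]$ have processing times $p_j\ge0$; for a bag $B$, $p(B)=\sum_{j\in B}p_j$. There are $m$ machines with predicted speeds $\hat s_1\ge\dots\ge\hat s_m$; $opt(\mathbf p,\hat{\mathbf s})$ is the minimum makespan $\max_i(\text{load of } i)/\hat s_i$ of assigning jobs to machines with speeds $\hat{\mathbf s}$. Algorithm IPR. Input: $\hat{\mathbf s}$, $\mathbf p$, $\alpha\in(0,1)$, accuracy $\epsilon\in(0,1)$, $\rho\ge1$. (1) Compute a partition $B_1,\dots,B_m$ with $p(B_1)\ge\dots\ge p(B_m)$ such that putting $B_i$ on machine $i$ has makespan at most $(1+\epsilon)opt(\mathbf p,\hat{\mathbf s})$ under speeds $\hat{\mathbf s}$. (2) Set $\overline{OPT}_C=\max_i p(B_i)/\hat s_i$ and tentative assignment $\mathcal M_i=\{B_i\}$. (3) While $\max\{p(B): B\in\cup_i\mathcal M_i, |B|\ge2\}>\rho\min\{p(B):B\in\cup_i\mathcal M_i\}$: compute $\mathcal M'=$ LPT-Rebalance$(\mathcal M)$; if $\max_i\sum_{B\in\mathcal M'_i}p(B)/\hat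 s_i>(1+\alpha)\overline{OPT}_C$ return the current bags $\cup_i\mathcal M_i$; else $\mathcal M\leftarrow\mathcal M'$. (4) Return the bags $\cup_i\mathcal M_i$. LPT-Rebalance: let $B_{\min}$ be a bag of minimum $p(B)$ over all bags, $\mathcal M_{\min}$ its collection, $\mathcal M_{\max}$ a collection containing a bag of maximum $p(B)$ among bags with at least two jobs. Move $B_{\min}$ into $\mathcal M_{\max}$, let $\ell=|\mathcal M_{\max}|$, pool its jobs and redistribute them into $\ell$ new bags by LPT (jobs in non-increasing processing time, each into a currently least-loaded bag); these form the new $\mathcal M_{\max}$. *)

theory Defs
  imports Complex_Main "HOL-Library.FuncSet"
begin

(* Jobs are indices j < n, machines are indices i < m (0-based); bags are sets of jobs. *)

definition pb :: "(nat \<Rightarrow> real) \<Rightarrow> nat set \<Rightarrow> real" where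
  "pb p B = (\<Sum>j\<in>B. p j)"

definition asg_makespan :: "nat \<Rightarrow> nat \<Rightarrow> (nat \<Rightarrow> real) \<Rightarrow> (nat \<Rightarrow> real) \<Rightarrow> (nat \<Rightarrow> nat) \<Rightarrow> real" where
  "asg_makespan n m p s f = Max ((\<lambda>i. (\<Sum>j\<in>{j\<in>{..<n}. f j = i}. p j) / s i) ` {..<m})"

definition opt :: "nat \<Rightarrow> nat \<Rightarrow> (nat \<Rightarrow> real) \<Rightarrow> (nat \<Rightarrow> real) \<Rightarrow> real" where
  "opt n m p s = Min (asg_makespan n m p s ` ({..<n} \<rightarrow>\<^sub>E {..<m}))"

definition ipr_step1 :: "nat \<Rightarrow> nat \<Rightarrow> (nat \<Rightarrow> real) \<Rightarrow> (nat \<Rightarrow> real) \<Rightarrow> real \<Rightarrow> (nat \<Rightarrow> nat set) \<Rightarrow> bool" where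
  "ipr_step1 n m p s eps B \<longleftrightarrow>
     (\<forall>i<m. \<forall>i'<m. i \<noteq> i' \<longrightarrow> B i \<inter> B i' = {}) \<and>
     (\<Union>i<m. B i) = {..<n} \<and>
     (\<forall>i j. i \<le> j \<and> j < m \<longrightarrow> pb p (B j) \<le> pb p (B i)) \<and>
     Max ((\<lambda>i. pb p (B i) / s i) ` {..<m}) \<le> (1 + eps) * opt n m p s"

(* tentative assignments: machine i < m holds the collection (list of bags) M i *)
type_synonym tass = "nat \<Rightarrow> nat set list"

definition bags :: "nat \<Rightarrow> tass \<Rightarrow> nat set set" where
  "bags m M = (\<Union>i<m. set (M i))"

definition bmin :: "nat \<Rightarrow> (nat \<Rightarrow> real) \<Rightarrow> tass \<Rightarrow> real" where
  "bmin m p M = Min (pb p ` bags m M)"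

definition bmax :: "nat \<Rightarrow> (nat \<Rightarrow> real) \<Rightarrow> tass \<Rightarrow> real" where
  "bmax m p M = Max (pb p ` {B \<in> bags m M. 2 \<le> card B})"

definition tass_makespan :: "nat \<Rightarrow> (nat \<Rightarrow> real) \<Rightarrow> (nat \<Rightarrow> real) \<Rightarrow> tass \<Rightarrow> real" where
  "tass_makespan m p s M = Max ((\<lambda>i. sum_list (map (pb p) (M i)) / s i) ` {..<m})"

definition loop_cond :: "nat \<Rightarrow> (nat \<Rightarrow> real) \<Rightarrow> real \<Rightarrow> tass \<Rightarrow> bool" where
  "loop_cond m p rho M \<longleftrightarrow> (\<exists>B\<in>bags m M. 2 \<le> card B \<and> pb p B > rho * bmin m p M)"

inductive lpt_fill :: "(nat \<Rightarrow> real) \<Rightarrow> nat set list \<Rightarrow> nat list \<Rightarrow> nat set list \<Rightarrow> bool"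
  for p where
  lpt_nil: "lpt_fill p Bs [] Bs"
| lpt_cons: "\<lbrakk> k < length Bs; \<forall>k'<length Bs. pb p (Bs ! k) \<le> pb p (Bs ! k');
              lpt_fill p (Bs[k := insert j (Bs ! k)]) js Bs' \<rbrakk>
             \<Longrightarrow> lpt_fill p Bs (j # js) Bs'"

definition lpt :: "(nat \<Rightarrow> real) \<Rightarrow> nat set \<Rightarrow> nat \<Rightarrow> nat set list \<Rightarrow> bool" where
  "lpt p J l Bs \<longleftrightarrow> (\<exists>js. set js = J \<and> distinct js \<and> sorted_wrt (\<lambda>a b. p b \<le> p a) js \<and>
                           lpt_fill p (replicate l {}) js Bs)"

(* LPT-Rebalance (nondeterministic: all admissible choices of B_min, M_max and LPT ties) *)
definition lpt_rebalance :: "nat \<Rightarrow> (nat \<Rightarrow> real) \<Rightarrow> tass \<Rightarrow> tass \<Rightarrow> bool" where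
  "lpt_rebalance m p M M' \<longleftrightarrow>
     (\<exists>imin kmin imax kmax Bs.
        imin < m \<and> kmin < length (M imin) \<and> pb p (M imin ! kmin) = bmin m p M \<and>
        imax < m \<and> kmax < length (M imax) \<and> 2 \<le> card (M imax ! kmax) \<and>
        pb p (M imax ! kmax) = bmax m p M \<and>
        (let Bmin = M imin ! kmin;
             M1 = M(imin := take kmin (M imin) @ drop (Suc kmin) (M imin));
             C = M1 imax @ [Bmin]
         in lpt p (\<Union> (set C)) (length C) Bs \<and> M' = M1(imax := Bs)))"

inductive ipr_reach :: "nat \<Rightarrow> (nat \<Rightarrow> real) \<Rightarrow> (nat \<Rightarrow> real) \<Rightarrow> real \<Rightarrow> real \<Rightarrow> real \<Rightarrow> tass \<Rightarrow> tass \<Rightarrow> bool"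
  for m p s alpha rho OPTC M0 where
  reach_init: "ipr_reach m p s alpha rho OPTC M0 M0"
| reach_step: "\<lbrakk> ipr_reach m p s alpha rho OPTC M0 M; loop_cond m p rho M; lpt_rebalance m p M M';
                 tass_makespan m p s M' \<le> (1 + alpha) * OPTC \<rbrakk>
               \<Longrightarrow> ipr_reach m p s alpha rho OPTC M0 M'"

definition ipr_final :: "nat \<Rightarrow> (nat \<Rightarrow> real) \<Rightarrow> (nat \<Rightarrow> real) \<Rightarrow> real \<Rightarrow> real \<Rightarrow> (nat \<Rightarrow> nat set) \<Rightarrow> tass \<Rightarrow> bool" where
  "ipr_final m p s alpha rho B M \<longleftrightarrow>
     (let OPTC = Max ((\<lambda>i. pb p (B i) / s i) ` {..<m}) in
      ipr_reach m p s alpha rho OPTC (\<lambda>i. [B i]) M \<and>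
      (\<not> loop_cond m p rho M \<or>
       (\<exists>M'. lpt_rebalance m p M M' \<and> tass_makespan m p s M' > (1 + alpha) * OPTC)))"

end

theory Submission
  imports Defs
begin

definition pw :: "(nat \<Rightarrow> real) \<Rightarrow> nat set list \<Rightarrow> bool" where
  "pw p xs \<longleftrightarrow> (\<forall>a<length xs. \<forall>b<length xs. a \<noteq> b \<longrightarrow> 2 \<le> card (xs!a) \<longrightarrow>
      pb p (xs!a) \<le> 2 * pb p (xs!b))"

definition Inv :: "nat \<Rightarrow> (nat \<Rightarrow> real) \<Rightarrow> tass \<Rightarrow> bool" where
  "Inv m p M \<longleftrightarrow> (\<forall>i<m. pw p (M i) \<and> (\<forall>X\<in>set (M i). \<forall>x\<in>X. 0 \<le> p x))"

lemma lpt_fill_inv: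
  assumes "lpt_fill p Bs js Bs'"
  shows "(\<forall>X\<in>set Bs. finite X \<and> (\<forall>x\<in>X. 0 \<le> p x \<and> (\<forall>y\<in>set js. p y \<le> p x))) \<Longrightarrow>
    (\<forall>y\<in>set js. 0 \<le> p y) \<Longrightarrow> sorted_wrt (\<lambda>a b. p b \<le> p a) js \<Longrightarrow> distinct js \<Longrightarrow>
    (\<forall>X\<in>set Bs. X \<inter> set js = {}) \<Longrightarrow> pw p Bs \<Longrightarrow>
    pw p Bs' \<and> (\<forall>X\<in>set Bs'. \<forall>x\<in>X. 0 \<le> p x)"
  using assms
proof (induction)
  case (lpt_nil Bs)
  then show ?case by auto
next
  case (lpt_cons k Bs j js Bs')
  define N where "N = Bs[k := insert j (Bs ! k)]"
  have Bk: "Bs ! k \<in> set Bs" using lpt_cons.hyps(1) by simp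
  have jn: "j \<notin> Bs ! k" using lpt_cons.prems(5) Bk by auto
  have finBk: "finite (Bs ! k)" using lpt_cons.prems(1) Bk by auto
  have pj: "0 \<le> p j" using lpt_cons.prems(2) by auto
  have pins: "pb p (insert j (Bs ! k)) = p j + pb p (Bs ! k)"
    unfolding pb_def using jn finBk by simp
  have setN: "set N \<subseteq> insert (insert j (Bs ! k)) (set Bs)"
    unfolding N_def by (rule set_update_subset_insert)
  have h1: "\<forall>X\<in>set N. finite X \<and> (\<forall>x\<in>X. 0 \<le> p x \<and> (\<forall>y\<in>set js. p y \<le> p x))"
  proof
    fix X assume "X \<in> set N"
    then have "X = insert j (Bs ! k) \<or> X \<in> set Bs" using setN by auto
    then show "finite X \<and> (\<forall>x\<in>X. 0 \<le> p x \<and> (\<forall>y\<in>set js. p y \<le> p x))"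
    proof
      assume X: "X = insert j (Bs ! k)"
      show ?thesis using X finBk pj lpt_cons.prems(1,3) Bk by auto
    next
      assume "X \<in> set Bs"
      then show ?thesis using lpt_cons.prems(1) by auto
    qed
  qed
  have h5: "\<forall>X\<in>set N. X \<inter> set js = {}"
  proof
    fix X assume "X \<in> set N"
    then have "X = insert j (Bs ! k) \<or> X \<in> set Bs" using setN by auto
    then show "X \<inter> set js = {}" using lpt_cons.prems(4,5) Bk by auto
  qed
  have h6: "pw p N"
    unfolding pw_def
  proof (intro allI impI)
    fix a b assume a: "a < length N" and b: "b < length N" and ab: "a \<noteq> b"
      and c: "2 \<le> card (N ! a)"
    have la: "a < length Bs" and lb: "b < length Bs" using a b unfolding N_def by auto
    show "pb p (N ! a) \<le> 2 * pb p (N ! b)"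
    proof (cases "a = k")
      case True
      then have Na: "N ! a = insert j (Bs ! k)" unfolding N_def using la by simp
      have Nb: "N ! b = Bs ! b" unfolding N_def using ab True by simp
      have "Bs ! k \<noteq> {}" using c Na by auto
      then obtain x where x: "x \<in> Bs ! k" by auto
      have "p j \<le> p x" using lpt_cons.prems(1) Bk x by auto
      moreover have "p x \<le> pb p (Bs ! k)" unfolding pb_def
        using finBk x lpt_cons.prems(1) Bk by (intro member_le_sum) auto
      moreover have "pb p (Bs ! k) \<le> pb p (Bs ! b)" using lpt_cons.hyps(2) lb by auto
      ultimately show ?thesis unfolding Na Nb pins using pj by linarith
    next
      case False
      then have Na: "N ! a = Bs ! a" unfolding N_def by simp
      have "pb p (Bs ! a) \<le> 2 * pb p (Bs ! b)"
        using lpt_cons.prems(6) la lb ab c Na unfolding pw_def by auto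
      moreover have "pb p (Bs ! b) \<le> pb p (N ! b)"
        unfolding N_def using pins pj lb by (cases "b = k") auto
      ultimately show ?thesis unfolding Na by linarith
    qed
  qed
  show ?case
    using lpt_cons.IH[folded N_def] h1 h5 h6 lpt_cons.prems(2,3,4) by auto
qed

lemma remove_nth:
  assumes "k < length xs" "a < length xs - 1"
  shows "(take k xs @ drop (Suc k) xs) ! a = xs ! (if a < k then a else Suc a)"
  using assms by (auto simp: nth_append min_def)

lemma pw_remove:
  assumes "pw p xs" "k < length xs"
  shows "pw p (take k xs @ drop (Suc k) xs)"
  unfolding pw_def
proof (intro allI impI)
  fix a b
  assume a: "a < length (take k xs @ drop (Suc k) xs)" and b: "b < length (take k xs @ drop (Suc k) xs)"
    and ab: "a \<noteq> b" and c: "2 \<le> card ((take k xs @ drop (Suc k) xs) ! a)"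
  have la: "a < length xs - 1" and lb: "b < length xs - 1" using a b assms(2) by auto
  define a' where "a' = (if a < k then a else Suc a)"
  define b' where "b' = (if b < k then b else Suc b)"
  have "a' \<noteq> b'" using ab unfolding a'_def b'_def by auto
  moreover have "a' < length xs" "b' < length xs" using la lb unfolding a'_def b'_def by auto
  ultimately show "pb p ((take k xs @ drop (Suc k) xs) ! a) \<le> 2 * pb p ((take k xs @ drop (Suc k) xs) ! b)"
    using assms(1) c unfolding pw_def remove_nth[OF assms(2) la] remove_nth[OF assms(2) lb]
      a'_def[symmetric] b'_def[symmetric] by blast
qed

lemma set_remove: "set (take k xs @ drop (Suc k) xs) \<subseteq> set xs"
  using set_take_subset set_drop_subset by fastforce

lemma inv_step:
  assumes "Inv m p M" "lpt_rebalance m p M M'"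
  shows "Inv m p M'"
proof -
  obtain imin kmin imax kmax Bs where
    h: "imin < m" "kmin < length (M imin)" "imax < m"
    and rest: "(let Bmin = M imin ! kmin;
             M1 = M(imin := take kmin (M imin) @ drop (Suc kmin) (M imin));
             C = M1 imax @ [Bmin]
         in lpt p (\<Union> (set C)) (length C) Bs \<and> M' = M1(imax := Bs))"
    using assms(2) unfolding lpt_rebalance_def by blast
  define M1 where "M1 = M(imin := take kmin (M imin) @ drop (Suc kmin) (M imin))"
  define C where "C = M1 imax @ [M imin ! kmin]"
  have L: "lpt p (\<Union> (set C)) (length C) Bs" and M': "M' = M1(imax := Bs)"
    using rest unfolding Let_def M1_def C_def by auto
  have M1i: "\<forall>i<m. pw p (M1 i) \<and> set (M1 i) \<subseteq> set (M i)"
    using assms(1) h pw_remove set_remove[of kmin "M imin"] unfolding Inv_def M1_def by auto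
  have setC: "set C \<subseteq> set (M imax) \<union> set (M imin)"
    unfolding C_def using M1i h by auto
  have nnC: "\<forall>X\<in>set C. \<forall>x\<in>X. 0 \<le> p x"
    using setC assms(1) h unfolding Inv_def by blast
  obtain js where js: "set js = \<Union> (set C)" "distinct js" "sorted_wrt (\<lambda>a b. p b \<le> p a) js"
    "lpt_fill p (replicate (length C) {}) js Bs"
    using L unfolding lpt_def by blast
  have pw0: "pw p (replicate (length C) {})" unfolding pw_def by auto
  have "pw p Bs \<and> (\<forall>X\<in>set Bs. \<forall>x\<in>X. 0 \<le> p x)"
    apply (rule lpt_fill_inv[OF js(4)])
    using js nnC pw0 by auto
  then show ?thesis
    using M1i assms(1) unfolding Inv_def M' by (auto, blast)
qed

lemma reach_inv:
  assumes "ipr_reach m p s alpha rho OPTC M0 M" "Inv m p M0"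
  shows "Inv m p M"
  using assms by induction (auto intro: inv_step)

lemma bound:
  assumes "pw p xs" "a < length xs" "2 \<le> card (xs ! a)"
  shows "pb p (xs ! a) \<le> 2 * sum_list (map (pb p) xs) / (real (length xs) + 1)"
proof -
  let ?L = "pb p (xs ! a)"
  let ?A = "{..<length xs} - {a}"
  have W: "sum_list (map (pb p) xs) = (\<Sum>k<length xs. pb p (xs ! k))"
    by (simp add: sum_list_sum_nth atLeast0LessThan)
  also have "\<dots> = ?L + (\<Sum>k\<in>?A. pb p (xs ! k))"
    using assms(2) by (simp add: sum.remove)
  finally have W2: "sum_list (map (pb p) xs) = ?L + (\<Sum>k\<in>?A. pb p (xs ! k))" .
  have "\<forall>k\<in>?A. ?L / 2 \<le> pb p (xs ! k)"
  proof
    fix k assume "k \<in> ?A"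
    then have "k < length xs" "k \<noteq> a" by auto
    then have "?L \<le> 2 * pb p (xs ! k)" using assms unfolding pw_def by metis
    then show "?L / 2 \<le> pb p (xs ! k)" by simp
  qed
  then have "real (card ?A) * (?L / 2) \<le> (\<Sum>k\<in>?A. pb p (xs ! k))"
    by (intro sum_bounded_below) auto
  moreover have "card ?A = length xs - 1" using assms(2) by simp
  ultimately have "real (length xs - 1) * (?L / 2) \<le> (\<Sum>k\<in>?A. pb p (xs ! k))" by simp
  moreover have "real (length xs - 1) = real (length xs) - 1" using assms(2) by simp
  ultimately have "(real (length xs) + 1) * ?L \<le> 2 * sum_list (map (pb p) xs)"
    using W2 by (simp add: algebra_simps)
  then show ?thesis by (simp add: field_simps)
qed

theorem lemma7:
  fixes n m :: nat and p s :: "nat \<Rightarrow> real" and alpha eps :: real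
    and B :: "nat \<Rightarrow> nat set" and M :: tass and i :: nat and Bx :: "nat set"
  assumes "1 \<le> m"
    and "\<forall>j<n. 0 \<le> p j"
    and "\<forall>i<m. 0 < s i"
    and "\<forall>i j. i \<le> j \<and> j < m \<longrightarrow> s j \<le> s i"
    and "0 < alpha" and "alpha < 1" and "0 < eps" and "eps < 1"
    and "ipr_step1 n m p s eps B"
    and "ipr_final m p s alpha 4 B M"
    and "i < m" and "Bx \<in> set (M i)" and "2 \<le> card Bx"
    and "pb p Bx = bmax m p M"
  shows "bmax m p M \<le> 2 * sum_list (map (pb p) (M i)) / (real (length (M i)) + 1)"
proof -
  have U: "(\<Union>i<m. B i) = {..<n}" using assms(9) unfolding ipr_step1_def by blast
  have I0: "Inv m p (\<lambda>i. [B i])"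
    unfolding Inv_def pw_def
  proof (intro allI impI conjI ballI)
    fix i x X assume "i < m" "X \<in> set [B i]" "x \<in> X"
    then have "x < n" using U by auto
    then show "0 \<le> p x" using assms(2) by auto
  qed auto
  have R: "ipr_reach m p s alpha 4 (Max ((\<lambda>i. pb p (B i) / s i) ` {..<m})) (\<lambda>i. [B i]) M"
    using assms(10) unfolding ipr_final_def Let_def by blast
  have "Inv m p M" by (rule reach_inv[OF R I0])
  then have "pw p (M i)" using assms(11) unfolding Inv_def by auto
  obtain a where a: "a < length (M i)" "M i ! a = Bx" using assms(12) by (auto simp: in_set_conv_nth)
  show ?thesis using bound[OF \<open>pw p (M i)\<close> a(1)] a assms(13,14) by simp
qed

end
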